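(* For all $a, b \in \mathbb{N}$, $R_\mathrm{cyc}(K_a, P_b^\mathrm{mon}) = 1 + (a-1)(b-1)$.
   Context: All graphs are finite, simple and undirected, and a graph of order $n$ has vertex set $\{0,1,\ldots,n-1\}$; $K_n$ is the complete graph on $\{0,\ldots,n-1\}$. A $2$-edge-coloring of $K_n$ assigns each edge a color in $\{1,2\}$. An embedding of $H$ in color $j$ is an injective map $\varphi\colon V(H)\to V(K_n)$ such that every edge $uv$ of $H$ goes to an edge $\{\varphi(u),\varphi(v)\}$ of color $j$; it is increasing up to a cyclic permutation if there exists $t\in V(H)$ such that $(\varphi(t),\ldots,\varphi(|H|-1),\varphi(0),\ldots,\varphi(t-1))$ is increasing. $R_\mathrm{cyc}(H_1,H_2)$ is the smallest $n$ such that every $2$-edge-coloring of $K_n$ admits an embedding of $H_1$ in color $1$ or of $H_2$ in color $2$ that is increasing up to a cyclic permutation. The monotone path $P_n^\mathrm{mon}$ has edges $\{i,i+1\}$, $0\le i\le n-2$. *)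

theory Defs
  imports Main
begin

text \<open>A graph of order h is represented as a pair (h, E) where E is a set of
  2-element subsets of {0..<h}.\<close>
type_synonym graph = "nat \<times> nat set set"

definition complete_graph :: "nat \<Rightarrow> graph" where
  "complete_graph n = (n, {{u, v} | u v. u < n \<and> v < n \<and> u \<noteq> v})"

definition mon_path :: "nat \<Rightarrow> graph" where
  "mon_path n = (n, {{i, Suc i} | i. Suc i < n})"

definition two_coloring :: "nat \<Rightarrow> (nat set \<Rightarrow> nat) \<Rightarrow> bool" where
  "two_coloring n c \<longleftrightarrow> (\<forall>u v. u < n \<and> v < n \<and> u \<noteq> v \<longrightarrow> c {u, v} \<in> {1, 2})"

definition embedding ::
  "nat \<Rightarrow> (nat set \<Rightarrow> nat) \<Rightarrow> nat \<Rightarrow> graph \<Rightarrow> (nat \<Rightarrow> nat) \<Rightarrow> bool" where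
  "embedding n c j H \<phi> \<longleftrightarrow>
     inj_on \<phi> {..<fst H} \<and> \<phi> ` {..<fst H} \<subseteq> {..<n} \<and>
     (\<forall>u v. {u, v} \<in> snd H \<longrightarrow> c {\<phi> u, \<phi> v} = j)"

definition cyc_increasing :: "nat \<Rightarrow> (nat \<Rightarrow> nat) \<Rightarrow> bool" where
  "cyc_increasing h \<phi> \<longleftrightarrow>
     (\<exists>t < h. sorted_wrt (<) (map \<phi> ([t..<h] @ [0..<t])))"

definition R_cyc :: "graph \<Rightarrow> graph \<Rightarrow> nat" where
  "R_cyc H1 H2 = (LEAST n. \<forall>c. two_coloring n c \<longrightarrow>
      (\<exists>\<phi>. embedding n c 1 H1 \<phi> \<and> cyc_increasing (fst H1) \<phi>) \<or>
      (\<exists>\<phi>. embedding n c 2 H2 \<phi> \<and> cyc_increasing (fst H2) \<phi>))"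

end

theory Submission
  imports Defs
begin

lemma main_lemma:
  assumes col: "two_coloring n c"
  shows "S \<subseteq> {..<n} \<Longrightarrow> card S \<ge> 1 + (a-1)*b \<Longrightarrow>
    (\<exists>K \<subseteq> S. card K = a \<and> (\<forall>u\<in>K. \<forall>v\<in>K. u \<noteq> v \<longrightarrow> c {u,v} = 1)) \<or>
    (\<exists>xs. length xs = Suc b \<and> set xs \<subseteq> S \<and> sorted_wrt (<) xs \<and>
       (\<forall>i. Suc i < Suc b \<longrightarrow> c {xs!i, xs!Suc i} = 2))"
proof (induction b arbitrary: S)
  case 0
  then obtain x where "x \<in> S" by fastforce
  then show ?case by (intro disjI2 exI[of _ "[x]"]) auto
next
  case (Suc b)
  have finS: "finite S" using Suc.prems(1) finite_subset by blast
  define A where "A = {v\<in>S. \<not>(\<exists>w\<in>S. w < v \<and> c {w,v} = 2)}"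
  have AS: "A \<subseteq> S" unfolding A_def by blast
  show ?case
  proof (cases "card A \<ge> a")
    case True
    then obtain K where K: "K \<subseteq> A" "card K = a"
      by (meson obtain_subset_with_card_n)
    have "\<forall>u\<in>K. \<forall>v\<in>K. u \<noteq> v \<longrightarrow> c {u,v} = 1"
    proof (intro ballI impI)
      fix u v assume uv: "u \<in> K" "v \<in> K" "u \<noteq> v"
      have un: "u < n" "v < n" using uv K AS Suc.prems(1) by auto
      have c12: "c {u,v} \<in> {1,2}" using col un uv(3) unfolding two_coloring_def by blast
      have "c {u,v} \<noteq> 2"
      proof (cases "u < v")
        case True
        then show ?thesis using uv K AS unfolding A_def by blast
      next
        case False
        then have "v < u" using uv(3) by simp
        then show ?thesis using uv K AS unfolding A_def by (auto simp: insert_commute)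
      qed
      then show "c {u,v} = 1" using c12 by auto
    qed
    then show ?thesis using K AS by (intro disjI1 exI[of _ K]) auto
  next
    case False
    have "card (S - A) = card S - card A" using finS AS by (simp add: card_Diff_subset finite_subset)
    moreover have "card S \<ge> 1 + (a-1)*b + (a-1)" using Suc.prems(2) mult_Suc_right[of "a-1" b] by linarith
    ultimately have cd: "card (S - A) \<ge> 1 + (a-1)*b" using False by linarith
    have sub: "S - A \<subseteq> {..<n}" using Suc.prems(1) by blast
    from Suc.IH[OF sub cd] show ?thesis
    proof
      assume "\<exists>K\<subseteq>S - A. card K = a \<and> (\<forall>u\<in>K. \<forall>v\<in>K. u \<noteq> v \<longrightarrow> c {u, v} = 1)"
      then show ?thesis by blast
    next
      assume "\<exists>xs. length xs = Suc b \<and> set xs \<subseteq> S - A \<and> sorted_wrt (<) xs \<and>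
         (\<forall>i. Suc i < Suc b \<longrightarrow> c {xs ! i, xs ! Suc i} = 2)"
      then obtain xs where xs: "length xs = Suc b" "set xs \<subseteq> S - A" "sorted_wrt (<) xs"
         "\<forall>i. Suc i < Suc b \<longrightarrow> c {xs ! i, xs ! Suc i} = 2" by blast
      have x0: "xs!0 \<in> S - A" using xs(1,2) by (metis nth_mem subsetD zero_less_Suc)
      then obtain w where w: "w \<in> S" "w < xs!0" "c {w, xs!0} = 2" unfolding A_def by blast
      have "\<forall>y\<in>set xs. w < y"
      proof
        fix y assume "y \<in> set xs"
        then obtain j where j: "j < length xs" "y = xs!j" by (metis in_set_conv_nth)
        have "xs!0 \<le> xs!j"
        proof (cases j)
          case 0 then show ?thesis by simp
        next
          case (Suc j') then show ?thesis using j xs(3) sorted_wrt_nth_less by fastforce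
        qed
        then show "w < y" using w j by simp
      qed
      then have srt: "sorted_wrt (<) (w # xs)" using xs(3) by simp
      have "\<forall>i. Suc i < Suc (Suc b) \<longrightarrow> c {(w#xs) ! i, (w#xs) ! Suc i} = 2"
      proof (intro allI impI)
        fix i assume "Suc i < Suc (Suc b)"
        then show "c {(w#xs) ! i, (w#xs) ! Suc i} = 2"
          using w xs(4) by (cases i) auto
      qed
      then show ?thesis using srt xs w by (intro disjI2 exI[of _ "w # xs"]) auto
    qed
  qed
qed


lemma clique_emb:
  assumes "K \<subseteq> {..<n}" "card K = a" "a \<ge> 1"
    and cl: "\<forall>u\<in>K. \<forall>v\<in>K. u \<noteq> v \<longrightarrow> c {u,v} = 1"
  shows "\<exists>\<phi>. embedding n c 1 (complete_graph a) \<phi> \<and> cyc_increasing (fst (complete_graph a)) \<phi>"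
proof -
  have fin: "finite K" using assms(1) finite_subset by blast
  define xs where "xs = sorted_list_of_set K"
  have xs: "length xs = a" "set xs = K" "sorted_wrt (<) xs" "distinct xs"
    using fin assms(2) by (auto simp: xs_def)
  have "embedding n c 1 (complete_graph a) (nth xs)"
    unfolding embedding_def complete_graph_def
  proof (intro conjI allI impI)
    show "inj_on (nth xs) {..<fst (a, {{u, v} |u v. u < a \<and> v < a \<and> u \<noteq> v})}"
      using xs by (simp add: inj_on_nth)
    show "(!) xs ` {..<fst (a, {{u, v} |u v. u < a \<and> v < a \<and> u \<noteq> v})} \<subseteq> {..<n}"
      using xs assms(1) by auto
  next
    fix u v assume "{u, v} \<in> snd (a, {{u, v} |u v. u < a \<and> v < a \<and> u \<noteq> v})"
    then obtain u' v' where h: "{u,v} = {u',v'}" "u' < a" "v' < a" "u' \<noteq> v'" by auto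
    then have "u < a" "v < a" "u \<noteq> v" by (auto simp: doubleton_eq_iff)
    moreover have "xs ! u \<in> K" "xs ! v \<in> K" using xs \<open>u < a\<close> \<open>v < a\<close> nth_mem by blast+
    moreover have "xs ! u \<noteq> xs ! v" using xs \<open>u < a\<close> \<open>v < a\<close> \<open>u \<noteq> v\<close> by (simp add: nth_eq_iff_index_eq)
    ultimately show "c {xs ! u, xs ! v} = 1" using cl by blast
  qed
  moreover have "cyc_increasing (fst (complete_graph a)) (nth xs)"
    unfolding cyc_increasing_def complete_graph_def
    using assms(3) xs by (intro exI[of _ 0]) (auto simp: map_nth[of xs, simplified xs])
  ultimately show ?thesis by blast
qed

lemma path_emb:
  assumes "set xs \<subseteq> {..<n}" "length xs = b" "b \<ge> 1" "sorted_wrt (<) xs"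
    and p: "\<forall>i. Suc i < b \<longrightarrow> c {xs!i, xs!Suc i} = 2"
  shows "\<exists>\<phi>. embedding n c 2 (mon_path b) \<phi> \<and> cyc_increasing (fst (mon_path b)) \<phi>"
proof -
  have d: "distinct xs" using assms(4) strict_sorted_iff by blast
  have "embedding n c 2 (mon_path b) (nth xs)"
    unfolding embedding_def mon_path_def
  proof (intro conjI allI impI)
    show "inj_on (nth xs) {..<fst (b, {{i, Suc i} |i. Suc i < b})}"
      using d assms(2) by (simp add: inj_on_nth)
    show "(!) xs ` {..<fst (b, {{i, Suc i} |i. Suc i < b})} \<subseteq> {..<n}"
      using assms(1,2) nth_mem by fastforce
  next
    fix u v assume "{u, v} \<in> snd (b, {{i, Suc i} |i. Suc i < b})"
    then obtain i where h: "{u,v} = {i, Suc i}" "Suc i < b" by auto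
    then have "(u = i \<and> v = Suc i) \<or> (u = Suc i \<and> v = i)" by (auto simp: doubleton_eq_iff)
    then show "c {xs ! u, xs ! v} = 2" using p h(2) by (auto simp: insert_commute)
  qed
  moreover have "cyc_increasing (fst (mon_path b)) (nth xs)"
    unfolding cyc_increasing_def mon_path_def
    using assms by (intro exI[of _ 0]) (auto simp: map_nth[of xs, simplified assms(2)])
  ultimately show ?thesis by blast
qed

theorem corollary4p21:
  fixes a b :: nat
  assumes "a \<ge> 1" and "b \<ge> 1"
  shows "R_cyc (complete_graph a) (mon_path b) = 1 + (a - 1) * (b - 1)"
  unfolding R_cyc_def
proof (rule Least_equality)
  show "\<forall>c. two_coloring (1 + (a - 1) * (b - 1)) c \<longrightarrow>
     (\<exists>\<phi>. embedding (1 + (a - 1) * (b - 1)) c 1 (complete_graph a) \<phi> \<and> cyc_increasing (fst (complete_graph a)) \<phi>) \<or>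
     (\<exists>\<phi>. embedding (1 + (a - 1) * (b - 1)) c 2 (mon_path b) \<phi> \<and> cyc_increasing (fst (mon_path b)) \<phi>)"
  proof (intro allI impI)
    fix c assume col: "two_coloring (1 + (a - 1) * (b - 1)) c"
    obtain b' where b': "b = Suc b'" using assms(2) by (cases b) auto
    let ?N = "1 + (a - 1) * (b - 1)"
    have "card {..<?N} \<ge> 1 + (a-1)*b'" using b' by simp
    from main_lemma[OF col _ this] b'
    consider (K) K where "K \<subseteq> {..<?N}" "card K = a" "\<forall>u\<in>K. \<forall>v\<in>K. u \<noteq> v \<longrightarrow> c {u, v} = 1"
      | (P) xs where "length xs = b" "set xs \<subseteq> {..<?N}" "sorted_wrt (<) xs"
          "\<forall>i. Suc i < b \<longrightarrow> c {xs ! i, xs ! Suc i} = 2" by blast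
    then show "(\<exists>\<phi>. embedding ?N c 1 (complete_graph a) \<phi> \<and> cyc_increasing (fst (complete_graph a)) \<phi>) \<or>
     (\<exists>\<phi>. embedding ?N c 2 (mon_path b) \<phi> \<and> cyc_increasing (fst (mon_path b)) \<phi>)"
    proof cases
      case K then show ?thesis using clique_emb[OF K(1,2) assms(1) K(3)] by blast
    next
      case P then show ?thesis using path_emb[OF P(2,1) assms(2) P(3,4)] by blast
    qed
  qed
next
  fix m assume Pm: "\<forall>c. two_coloring m c \<longrightarrow>
     (\<exists>\<phi>. embedding m c 1 (complete_graph a) \<phi> \<and> cyc_increasing (fst (complete_graph a)) \<phi>) \<or>
     (\<exists>\<phi>. embedding m c 2 (mon_path b) \<phi> \<and> cyc_increasing (fst (mon_path b)) \<phi>)"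
  show "1 + (a - 1) * (b - 1) \<le> m"
  proof (rule ccontr)
    assume "\<not> 1 + (a - 1) * (b - 1) \<le> m"
    then have mle: "m \<le> (a - 1) * (b - 1)" by simp
    define d where "d = b - 1"
    define c :: "nat set \<Rightarrow> nat" where
      "c = (\<lambda>e. if \<forall>x\<in>e. \<forall>y\<in>e. x div d = y div d then 2 else 1)"
    have "two_coloring m c" unfolding two_coloring_def c_def by auto
    with Pm consider (K) \<phi> where "embedding m c 1 (complete_graph a) \<phi>"
      | (P) \<phi> where "embedding m c 2 (mon_path b) \<phi>" by blast
    then show False
    proof cases
      case K
      then have inj: "inj_on \<phi> {..<a}" and img: "\<phi> ` {..<a} \<subseteq> {..<m}"
        and ed: "\<And>u v. {u,v} \<in> snd (complete_graph a) \<Longrightarrow> c {\<phi> u, \<phi> v} = 1"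
        unfolding embedding_def complete_graph_def by auto
      have "\<phi> 0 < m" using img assms(1) by (meson image_subset_iff lessThan_iff less_le_trans zero_less_one)
      then have dpos: "d > 0" using mle d_def by (cases "b - 1") auto
      define g where "g i = \<phi> i div d" for i
      have "inj_on g {..<a}"
      proof (rule inj_onI)
        fix u v assume uv: "u \<in> {..<a}" "v \<in> {..<a}" "g u = g v"
        show "u = v"
        proof (rule ccontr)
          assume "u \<noteq> v"
          then have "{u,v} \<in> snd (complete_graph a)" using uv unfolding complete_graph_def by auto
          then have "c {\<phi> u, \<phi> v} = 1" by (rule ed)
          then show False using uv(3) unfolding c_def g_def by auto
        qed
      qed
      moreover have "g ` {..<a} \<subseteq> {..<a-1}"
      proof
        fix y assume "y \<in> g ` {..<a}"
        then obtain i where i: "i < a" "y = g i" by auto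
        have "\<phi> i < (a - 1) * d" using img i mle d_def by auto
        then show "y \<in> {..<a-1}" using i unfolding g_def by (simp add: less_mult_imp_div_less)
      qed
      ultimately have "card {..<a} \<le> card {..<a-1}" by (meson card_inj_on_le finite_lessThan)
      then show False using assms(1) by simp
    next
      case P
      then have inj: "inj_on \<phi> {..<b}" and img: "\<phi> ` {..<b} \<subseteq> {..<m}"
        and ed: "\<And>u v. {u,v} \<in> snd (mon_path b) \<Longrightarrow> c {\<phi> u, \<phi> v} = 2"
        unfolding embedding_def mon_path_def by auto
      have "\<phi> 0 < m" using img assms(2) by (meson image_subset_iff lessThan_iff less_le_trans zero_less_one)
      then have dpos: "d > 0" using mle d_def by (cases "b - 1") auto
      have same: "i < b \<Longrightarrow> \<phi> i div d = \<phi> 0 div d" for i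
      proof (induction i)
        case 0 then show ?case by simp
      next
        case (Suc i)
        have "{i, Suc i} \<in> snd (mon_path b)" using Suc.prems unfolding mon_path_def by auto
        then have "c {\<phi> i, \<phi> (Suc i)} = 2" by (rule ed)
        then have "\<phi> i div d = \<phi> (Suc i) div d" unfolding c_def by (auto split: if_splits)
        then show ?case using Suc by simp
      qed
      define h where "h i = \<phi> i mod d" for i
      have "inj_on h {..<b}"
      proof (rule inj_onI)
        fix u v assume uv: "u \<in> {..<b}" "v \<in> {..<b}" "h u = h v"
        have "\<phi> u = \<phi> u div d * d + \<phi> u mod d" by (rule div_mult_mod_eq[symmetric])
        also have "\<phi> u div d = \<phi> v div d" using same[of u] same[of v] uv by simp
        also have "\<phi> u mod d = \<phi> v mod d" using uv(3) unfolding h_def .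
        also have "\<phi> v div d * d + \<phi> v mod d = \<phi> v" by (rule div_mult_mod_eq)
        finally show "u = v" using inj uv by (meson inj_onD)
      qed
      moreover have "h ` {..<b} \<subseteq> {..<d}" unfolding h_def using dpos by auto
      ultimately have "card {..<b} \<le> card {..<d}" by (meson card_inj_on_le finite_lessThan)
      then show False using assms(2) d_def by simp
    qed
  qed
qed

end
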